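(* Let $\mathcal G$ be a continuous game with players $k\in\{1,\dots,K\}$, action sets $\mathcal Z_k=\mathbb R^{n_k}$ and twice continuously differentiable cost functions $f_k:\mathbb R^n\to\mathbb R$ ($n=n_1+\dots+n_K$), and let $F=F_{\mathcal G}:\mathbb R^n\to\mathbb R^n$ be its gradient operator. Suppose $\mathcal G$ is monotone and that there are $\ell,\Lambda>0$ with $\|F(z)-F(z')\|\le \ell\|z-z'\|$ and $\|\partial F(z)-\partial F(z')\|_\sigma\le\Lambda\|z-z'\|$ for all $z,z'\in\mathbb R^n$. Let $z^{(-1)},z^{(0)}\in\mathbb R^n$ and suppose there is $z^*\in\mathbb R^n$ with $F(z^* )=0$, $\|z^*-z^{(-1)}\|\le D$ and $\|z^*-z^{(0)}\|\le D$. Let $\eta\le\min\{\frac{1}{150\ell},\frac{1}{1711D\Lambda}\}$ and let $z^{(t)}$ be the iterates of the optimistic gradient algorithm $z^{(t+1)}=z^{(t)}-2\eta F(z^{(t)})+\eta F(z^{(t-1)})$, $t\ge0$. Then for every integer $T\ge1$, $$\|F(z^{(T)})\|\le\frac{60D}{\eta\sqrt T}.$$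
   Context: For the game, $z=(z_1,\dots,z_K)$ with $z_k\in\mathbb R^{n_k}$, $z_{-k}$ denotes the actions of all players other than $k$, and $F_{\mathcal G}(z):=(\nabla_{z_1}f_1(z),\dots,\nabla_{z_K}f_K(z))\in\mathbb R^n$. The game is monotone if $\langle F_{\mathcal G}(z')-F_{\mathcal G}(z),z'-z\rangle\ge0$ for all $z,z'$. $\partial F$ denotes the Jacobian of $F$, $\|\cdot\|$ the Euclidean norm and $\|\cdot\|_\sigma$ the spectral norm. *)

theory Defs
  imports "HOL-Analysis.Analysis"
begin

text \<open>The joint action space
  R^n is real^'n; each coordinate i belongs to player pl i, so the action space of
  player k is the set of coordinates pl -` {k}.  Costs are f k :: real^'n => real.\<close>

definition C2_fun :: "(real^'n \<Rightarrow> real) \<Rightarrow> bool" where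
  "C2_fun g \<longleftrightarrow> (\<exists>g' g''.
      (\<forall>z. (g has_derivative blinfun_apply (g' z)) (at z)) \<and>
      (\<forall>z. (g' has_derivative blinfun_apply (g'' z)) (at z)) \<and>
      continuous_on UNIV g'')"

definition game_op :: "('k \<Rightarrow> real^'n \<Rightarrow> real) \<Rightarrow> ('n \<Rightarrow> 'k) \<Rightarrow> real^'n \<Rightarrow> real^'n" where
  "game_op f pl z = (\<chi> i. frechet_derivative (f (pl i)) (at z) (axis i 1))"

text \<open>Spectral norm of the difference of Jacobians = operator norm of the
  difference of the derivatives (Euclidean norms).\<close>
definition jac_diff_norm :: "(real^'n \<Rightarrow> real^'n) \<Rightarrow> real^'n \<Rightarrow> real^'n \<Rightarrow> real" where
  "jac_diff_norm F z z' =
     onorm (\<lambda>h. frechet_derivative F (at z) h - frechet_derivative F (at z') h)"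

end

theory Submission
  imports Defs
begin

lemma sum_shift1: fixes a :: "nat \<Rightarrow> real" assumes "\<And>s. a s \<ge> 0"
  shows "(\<Sum>k\<in>{2..T+1}. a (k-1)) \<le> (\<Sum>s<T+1. a s)"
proof (induction T)
  case 0 then show ?case using assms[of 0] by simp
next
  case (Suc T)
  have "{2..Suc T+1} = insert (Suc T + 1) {2..T+1}" by auto
  then have "(\<Sum>k\<in>{2..Suc T+1}. a (k-1)) = a (Suc T) + (\<Sum>k\<in>{2..T+1}. a (k-1))" by simp
  then show ?case using Suc by simp
qed

lemma sum_shift2: fixes a :: "nat \<Rightarrow> real"
  shows "(\<Sum>k\<in>{2..T+1}. a (k-2)) = (\<Sum>s<T. a s)"
proof (induction T)
  case 0 then show ?case by simp
next
  case (Suc T)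
  have "{2..Suc T+1} = insert (Suc T + 1) {2..T+1}" by auto
  then have "(\<Sum>k\<in>{2..Suc T+1}. a (k-2)) = a T + (\<Sum>k\<in>{2..T+1}. a (k-2))" by simp
  then show ?case using Suc by simp
qed

lemma og_core:
  fixes F :: "'a::real_inner \<Rightarrow> 'a" and x :: "nat \<Rightarrow> 'a"
  assumes mono: "\<And>u v. (F u - F v) \<bullet> (u - v) \<ge> 0"
  and lip: "\<And>u v. norm (F u - F v) \<le> l * norm (u - v)"
  and zero: "F zs = 0"
  and D1: "norm (zs - x 0) \<le> D" and D0: "norm (zs - x 1) \<le> D"
  and eta_pos: "\<eta> > 0" and l_pos: "l > 0" and eps: "l * \<eta> \<le> 1/150"
  and rec: "\<And>k. k \<ge> 1 \<Longrightarrow> x (Suc k) = x k - (2*\<eta>) *\<^sub>R F (x k) + \<eta> *\<^sub>R F (x (k-1))"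
  and T: "T \<ge> 1"
  shows "norm (F (x (Suc T))) \<le> 60 * D / (\<eta> * sqrt T)"
proof -
  define g where "g k = F (x k)" for k
  define w where "w k = x k + \<eta> *\<^sub>R g (k-1)" for k
  define h where "h k = F (w k)" for k
  define \<Phi> where "\<Phi> k = (norm (h k))\<^sup>2 + (norm (h k - g (k-1)))\<^sup>2" for k
  define a where "a k = (norm (g k))\<^sup>2" for k
  define e where "e = l * \<eta>"
  have e0: "e > 0" using l_pos eta_pos by (simp add: e_def)
  have e1: "e \<le> 1/150" using eps by (simp add: e_def)
  have e2: "e\<^sup>2 \<le> e/150"
  proof -
    have "e*e \<le> e*(1/150)" using e1 e0 by (intro mult_left_mono) auto
    then show ?thesis by (simp add: power2_eq_square)
  qed
  have D_nn: "D \<ge> 0" using D0 norm_ge_zero order_trans by blast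
  have sq2: "(X+Y)\<^sup>2 \<le> 2*(X\<^sup>2+Y\<^sup>2)" for X Y :: real
  proof -
    have "0 \<le> (X-Y)\<^sup>2" by simp
    then show ?thesis unfolding power2_eq_square by (simp add: algebra_simps)
  qed
  have lipe: "norm (F u - F v) \<le> e * norm c" if "u - v = \<eta> *\<^sub>R c" for u v c
  proof -
    have "norm (F u - F v) \<le> l * norm (u - v)" by (rule lip)
    also have "\<dots> = e * norm c" using that eta_pos by (simp add: e_def)
    finally show ?thesis .
  qed
  have W: "w (Suc k) = w k - \<eta> *\<^sub>R g k" if "k \<ge> 1" for k
  proof -
    have "(2*\<eta>) *\<^sub>R g k = \<eta> *\<^sub>R g k + \<eta> *\<^sub>R g k"
      by (simp add: scaleR_left_distrib[symmetric])
    then show ?thesis using rec[OF that] by (simp add: w_def g_def algebra_simps)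
  qed
  have xw: "x k = w k - \<eta> *\<^sub>R g (k-1)" for k by (simp add: w_def)
  have dec: "\<Phi> (Suc k) \<le> \<Phi> k" if k1: "k \<ge> 1" for k
  proof -
    define p where "p = h k"
    define q where "q = h (Suc k)"
    define b where "b = g k"
    define c where "c = g (k-1)"
    have "(q - p) \<bullet> (w (Suc k) - w k) \<ge> 0" using mono by (simp add: p_def q_def h_def)
    then have "(q - p) \<bullet> (- (\<eta> *\<^sub>R b)) \<ge> 0" using W[OF k1] by (simp add: b_def)
    then have "\<eta> * ((q - p) \<bullet> b) \<le> 0" by (simp add: inner_minus_right)
    then have A: "(q - p) \<bullet> b \<le> 0" using eta_pos by (simp add: mult_le_0_iff)
    have id: "(norm q)\<^sup>2 - (norm p)\<^sup>2 = (norm (q-b))\<^sup>2 - (norm (p-b))\<^sup>2 + 2*((q-p) \<bullet> b)"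
      by (simp add: power2_norm_eq_inner inner_diff_left inner_diff_right inner_commute algebra_simps)
    have "w (Suc k) - x k = \<eta> *\<^sub>R (c - b)"
      using W[OF k1] xw[of k] by (simp add: b_def c_def algebra_simps)
    then have L1: "norm (q - b) \<le> e * norm (c - b)" unfolding q_def b_def h_def g_def
      by (rule lipe)
    have tri: "norm (c - b) \<le> norm (p - b) + norm (p - c)"
      using norm_triangle_ineq[of "p - b" "c - p"] by (simp add: norm_minus_commute algebra_simps)
    have key: "2 * (norm (q-b))\<^sup>2 \<le> (norm (p-b))\<^sup>2 + (norm (p-c))\<^sup>2"
    proof -
      have "norm (q-b) \<le> e * (norm (p - b) + norm (p - c))"
        using L1 tri e0 by (meson mult_left_mono less_imp_le order_trans)
      then have "(norm (q-b))\<^sup>2 \<le> (e * (norm (p - b) + norm (p - c)))\<^sup>2"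
        by (simp add: power_mono)
      moreover have "2 * (e * (norm (p - b) + norm (p - c)))\<^sup>2 \<le> (norm (p-b))\<^sup>2 + (norm (p-c))\<^sup>2"
      proof -
        have "2 * (e * (norm (p - b) + norm (p - c)))\<^sup>2 = 2 * e\<^sup>2 * (norm (p - b) + norm (p - c))\<^sup>2"
          by (simp add: power_mult_distrib)
        also have "\<dots> \<le> 2 * e\<^sup>2 * (2*((norm (p-b))\<^sup>2 + (norm (p-c))\<^sup>2))"
          by (intro mult_left_mono sq2) auto
        also have "\<dots> \<le> (norm (p-b))\<^sup>2 + (norm (p-c))\<^sup>2"
        proof -
          have "e\<^sup>2 \<le> 1/4" using e1 e2 by linarith
          then have "(4*e\<^sup>2) * ((norm (p-b))\<^sup>2 + (norm (p-c))\<^sup>2) \<le> 1 * ((norm (p-b))\<^sup>2 + (norm (p-c))\<^sup>2)"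
            by (intro mult_right_mono) auto
          then show ?thesis by (simp add: algebra_simps)
        qed
        finally show ?thesis .
      qed
      ultimately show ?thesis by linarith
    qed
    have "\<Phi> (Suc k) = (norm q)\<^sup>2 + (norm (q - b))\<^sup>2" by (simp add: \<Phi>_def q_def b_def)
    moreover have "\<Phi> k = (norm p)\<^sup>2 + (norm (p - c))\<^sup>2" by (simp add: \<Phi>_def p_def c_def)
    ultimately show ?thesis using id key A by linarith
  qed
  have a_nn: "a s \<ge> 0" for s by (simp add: a_def)
  have dist: "(norm (w (Suc k) - zs))\<^sup>2 \<le> (norm (w k - zs))\<^sup>2 + \<eta>\<^sup>2 * (norm (g k - g (k-1)))\<^sup>2 - \<eta>\<^sup>2 * a (k-1)"
    if k1: "k \<ge> 1" for k
  proof -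
    define u where "u = x k - zs"
    define b where "b = g k"
    define c where "c = g (k-1)"
    have m: "b \<bullet> u \<ge> 0" using mono[of "x k" zs] zero by (simp add: g_def b_def u_def)
    have e1': "w (Suc k) - zs = u + \<eta> *\<^sub>R c - \<eta> *\<^sub>R b"
      using W[OF k1] by (simp add: w_def u_def b_def c_def algebra_simps)
    have e2': "w k - zs = u + \<eta> *\<^sub>R c" by (simp add: w_def u_def c_def algebra_simps)
    have "(norm (w (Suc k) - zs))\<^sup>2 = (norm (w k - zs))\<^sup>2 + \<eta>\<^sup>2 * (norm (b - c))\<^sup>2 - \<eta>\<^sup>2 * (norm c)\<^sup>2 - 2*\<eta>*(b \<bullet> u)"
      unfolding e1' e2' power2_norm_eq_inner
      by (simp add: inner_add_left inner_add_right inner_diff_left inner_diff_right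
          inner_commute power2_eq_square algebra_simps)
    moreover have "0 \<le> 2*\<eta>*(b \<bullet> u)" using m eta_pos by simp
    ultimately show ?thesis by (simp add: a_def b_def c_def)
  qed
  have lipstep1: "\<eta>\<^sup>2 * (norm (g 1 - g 0))\<^sup>2 \<le> 4 * e\<^sup>2 * D\<^sup>2"
  proof -
    have "norm (x 1 - x 0) \<le> norm (x 1 - zs) + norm (zs - x 0)"
      using norm_triangle_ineq[of "x 1 - zs" "zs - x 0"] by simp
    also have "\<dots> \<le> 2 * D" using D0 D1 by (simp add: norm_minus_commute)
    finally have "norm (g 1 - g 0) \<le> l * (2*D)"
      using lip[of "x 1" "x 0"] l_pos by (simp add: g_def) (smt (verit) mult_left_mono)
    then have "\<eta> * norm (g 1 - g 0) \<le> 2 * e * D" using eta_pos by (simp add: e_def)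
    then have "(\<eta> * norm (g 1 - g 0))\<^sup>2 \<le> (2 * e * D)\<^sup>2"
      using eta_pos by (intro power_mono) auto
    then show ?thesis by (simp add: power_mult_distrib)
  qed
  have rec2: "x k = x (k-1) - (2*\<eta>) *\<^sub>R g (k-1) + \<eta> *\<^sub>R g (k-2)" if k2: "k \<ge> 2" for k
  proof -
    obtain j where kj: "k = Suc (Suc j)" using k2 by (metis add_2_eq_Suc le_Suc_ex)
    show ?thesis using rec[of "Suc j"] unfolding kj g_def by simp
  qed
  have lipstep: "\<eta>\<^sup>2 * (norm (g k - g (k-1)))\<^sup>2 \<le> 8 * (e\<^sup>2*\<eta>\<^sup>2) * a (k-1) + 2 * (e\<^sup>2*\<eta>\<^sup>2) * a (k-2)"
    if k2: "k \<ge> 2" for k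
  proof -
    note r = rec2[OF k2]
    have "x k - x (k-1) = \<eta> *\<^sub>R (g (k-2) - 2 *\<^sub>R g (k-1))"
      unfolding r by (simp add: algebra_simps)
    then have "norm (g k - g (k-1)) \<le> e * norm (g (k-2) - 2 *\<^sub>R g (k-1))"
      unfolding g_def by (rule lipe)
    also have "\<dots> \<le> e * (2 * norm (g (k-1)) + norm (g (k-2)))"
      using e0 norm_triangle_ineq4[of "g (k-2)" "2 *\<^sub>R g (k-1)"]
      by (intro mult_left_mono) auto
    finally have "(norm (g k - g (k-1)))\<^sup>2 \<le> (e * (2 * norm (g (k-1)) + norm (g (k-2))))\<^sup>2"
      by (intro power_mono) auto
    also have "\<dots> = e\<^sup>2 * (2 * norm (g (k-1)) + norm (g (k-2)))\<^sup>2" by (simp add: power_mult_distrib)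
    also have "\<dots> \<le> e\<^sup>2 * (2 * ((2 * norm (g (k-1)))\<^sup>2 + (norm (g (k-2)))\<^sup>2))"
      by (intro mult_left_mono sq2) auto
    also have "\<dots> = e\<^sup>2 * (8 * a (k-1) + 2 * a (k-2))" by (simp add: a_def power_mult_distrib algebra_simps)
    finally have "\<eta>\<^sup>2 * (norm (g k - g (k-1)))\<^sup>2 \<le> \<eta>\<^sup>2 * (e\<^sup>2 * (8 * a (k-1) + 2 * a (k-2)))"
      by (intro mult_left_mono) auto
    then show ?thesis by (simp add: algebra_simps)
  qed
  define C0 where "C0 = (norm (w 1 - zs))\<^sup>2 + 4 * e\<^sup>2 * D\<^sup>2"
  define K where "K = e\<^sup>2 * \<eta>\<^sup>2"
  have K_nn: "K \<ge> 0" by (simp add: K_def)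
  have inv: "(norm (w (Suc N) - zs))\<^sup>2 + \<eta>\<^sup>2 * (\<Sum>s<N. a s)
      \<le> C0 + 8 * K * (\<Sum>s<N. a s) + 2 * K * (\<Sum>s<N-1. a s)" for N
  proof (induction N)
    case 0 then show ?case by (simp add: C0_def)
  next
    case (Suc N)
    show ?case
    proof (cases "N = 0")
      case True
      have "(norm (w 2 - zs))\<^sup>2 \<le> (norm (w 1 - zs))\<^sup>2 + \<eta>\<^sup>2 * (norm (g 1 - g 0))\<^sup>2 - \<eta>\<^sup>2 * a 0"
        using dist[of 1] by (simp add: numeral_2_eq_2)
      moreover have "0 \<le> 8 * K * a 0" using K_nn a_nn by simp
      ultimately show ?thesis using True lipstep1 by (simp add: C0_def numeral_2_eq_2)
    next
      case False
      have d: "(norm (w (Suc (Suc N)) - zs))\<^sup>2 \<le> (norm (w (Suc N) - zs))\<^sup>2 + \<eta>\<^sup>2 * (norm (g (Suc N) - g N))\<^sup>2 - \<eta>\<^sup>2 * a N"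
        using dist[of "Suc N"] by simp
      have l: "\<eta>\<^sup>2 * (norm (g (Suc N) - g N))\<^sup>2 \<le> 8 * K * a N + 2 * K * a (N-1)"
        using lipstep[of "Suc N"] False by (simp add: K_def)
      have s2: "(\<Sum>s<N. a s) = (\<Sum>s<N-1. a s) + a (N-1)"
        using False by (cases N) auto
      have eqs: "8 * K * (\<Sum>s<Suc N. a s) = 8 * K * (\<Sum>s<N. a s) + 8 * K * a N"
        "2 * K * (\<Sum>s<N. a s) = 2 * K * (\<Sum>s<N-1. a s) + 2 * K * a (N-1)"
        "\<eta>\<^sup>2 * (\<Sum>s<Suc N. a s) = \<eta>\<^sup>2 * (\<Sum>s<N. a s) + \<eta>\<^sup>2 * a N"
        by (simp_all add: s2 algebra_simps)
      show ?thesis using d l eqs Suc.IH by simp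
    qed
  qed
  define S where "S = (\<Sum>s<T+1. a s)"
  have S_nn: "S \<ge> 0" unfolding S_def by (intro sum_nonneg a_nn)
  have C0b: "C0 \<le> 11/10 * D\<^sup>2"
  proof -
    have "norm (g 0) \<le> l * D" using lip[of "x 0" zs] zero D1 l_pos
      by (simp add: g_def norm_minus_commute) (smt (verit) mult_left_mono)
    then have "\<eta> * norm (g 0) \<le> e * D" using eta_pos by (simp add: e_def)
    moreover have "norm (w 1 - zs) \<le> norm (x 1 - zs) + \<eta> * norm (g 0)"
      unfolding w_def using norm_triangle_ineq[of "x 1 - zs" "\<eta> *\<^sub>R g 0"] eta_pos
      by (simp add: algebra_simps)
    ultimately have "norm (w 1 - zs) \<le> (1 + e) * D" using D0 by (simp add: norm_minus_commute algebra_simps)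
    then have "(norm (w 1 - zs))\<^sup>2 \<le> ((1 + e) * D)\<^sup>2" by (intro power_mono) auto
    also have "\<dots> = (1 + 2*e + e\<^sup>2) * D\<^sup>2" by (simp add: power2_eq_square algebra_simps)
    finally have "(norm (w 1 - zs))\<^sup>2 \<le> (1 + 2*e + e\<^sup>2) * D\<^sup>2" .
    moreover have "(1 + 2*e + e\<^sup>2) * D\<^sup>2 + 4 * e\<^sup>2 * D\<^sup>2 \<le> 11/10 * D\<^sup>2"
    proof -
      have "1 + 2*e + 5 * e\<^sup>2 \<le> 11/10" using e1 e2 by linarith
      then have "(1 + 2*e + 5 * e\<^sup>2) * D\<^sup>2 \<le> 11/10 * D\<^sup>2" by (intro mult_right_mono) auto
      then show ?thesis by (simp add: algebra_simps)
    qed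
    ultimately show ?thesis by (simp add: C0_def)
  qed
  have etaS: "\<eta>\<^sup>2 * S \<le> 6/5 * D\<^sup>2"
  proof -
    have i: "\<eta>\<^sup>2 * S \<le> C0 + 8 * K * S + 2 * K * (\<Sum>s<T. a s)"
      using inv[of "T+1"] unfolding S_def
      by (smt (verit) norm_ge_zero zero_le_power2 diff_add_inverse2)
    have "(\<Sum>s<T. a s) \<le> S" unfolding S_def by (intro sum_mono2) (auto intro: a_nn)
    then have "2 * K * (\<Sum>s<T. a s) \<le> 2 * K * S" using K_nn by (intro mult_left_mono) auto
    moreover have "e\<^sup>2 \<le> 1/22500" using e1 e2 by linarith
    then have "e\<^sup>2 * (\<eta>\<^sup>2 * S) \<le> (1/22500) * (\<eta>\<^sup>2 * S)" using S_nn
      by (intro mult_right_mono) auto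
    then have "K * S \<le> (1/22500) * (\<eta>\<^sup>2 * S)" unfolding K_def by (simp add: mult.assoc)
    moreover have "8*K*S = 8*(K*S)" "2*K*S = 2*(K*S)" by simp_all
    ultimately have X: "\<eta>\<^sup>2 * S \<le> C0 + 10*(K*S)" using i by linarith
    have "D\<^sup>2 \<ge> 0" by simp
    then show ?thesis using X C0b \<open>K * S \<le> (1/22500) * (\<eta>\<^sup>2 * S)\<close> by linarith
  qed
  have Phib: "\<Phi> k \<le> 3 * (a (k-1) + a (k-2))" if k2: "k \<ge> 2" for k
  proof -
    define A where "A = norm (g (k-1))"
    define B where "B = norm (g (k-2))"
    define r where "r = norm (h k - g (k-1))"
    define H where "H = norm (h k)"
    note rr = rec2[OF k2]
    have two: "(2*\<eta>) *\<^sub>R g (k-1) = \<eta> *\<^sub>R g (k-1) + \<eta> *\<^sub>R g (k-1)"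
      by (simp add: scaleR_left_distrib[symmetric])
    have "w k - x (k-1) = \<eta> *\<^sub>R (g (k-2) - g (k-1))"
      unfolding w_def rr two by (simp add: algebra_simps)
    then have "r \<le> e * norm (g (k-2) - g (k-1))" unfolding r_def h_def g_def by (rule lipe)
    also have "\<dots> \<le> e * (A + B)" unfolding A_def B_def using e0 norm_triangle_ineq4[of "g (k-2)" "g (k-1)"]
      by (intro mult_left_mono) auto
    finally have r1: "r \<le> e * (A + B)" .
    have r0: "r \<ge> 0" by (simp add: r_def)
    have H1: "H \<le> A + r" unfolding H_def A_def r_def
      using norm_triangle_ineq[of "g (k-1)" "h k - g (k-1)"] by simp
    have "H\<^sup>2 \<le> (A + r)\<^sup>2" using H1 by (intro power_mono) (auto simp: H_def)
    also have "\<dots> \<le> 2 * (A\<^sup>2 + r\<^sup>2)" by (rule sq2)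
    finally have Hs: "H\<^sup>2 \<le> 2 * (A\<^sup>2 + r\<^sup>2)" .
    have "r\<^sup>2 \<le> (e * (A + B))\<^sup>2" using r1 r0 by (intro power_mono) auto
    also have "\<dots> = e\<^sup>2 * (A + B)\<^sup>2" by (simp add: power_mult_distrib)
    also have "\<dots> \<le> e\<^sup>2 * (2 * (A\<^sup>2 + B\<^sup>2))" by (intro mult_left_mono sq2) auto
    also have "\<dots> \<le> (1/6) * (A\<^sup>2 + B\<^sup>2)"
    proof -
      have "2 * e\<^sup>2 \<le> 1/6" using e1 e2 by linarith
      then have "(2 * e\<^sup>2) * (A\<^sup>2 + B\<^sup>2) \<le> (1/6) * (A\<^sup>2 + B\<^sup>2)" by (intro mult_right_mono) auto
      then show ?thesis by (simp add: algebra_simps)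
    qed
    finally have rs: "r\<^sup>2 \<le> (1/6) * (A\<^sup>2 + B\<^sup>2)" .
    have "\<Phi> k = H\<^sup>2 + r\<^sup>2" by (simp add: \<Phi>_def H_def r_def)
    moreover have "a (k-1) = A\<^sup>2" "a (k-2) = B\<^sup>2" by (simp_all add: a_def A_def B_def)
    moreover have "H\<^sup>2 \<le> 2 * A\<^sup>2 + 2 * r\<^sup>2" using Hs by simp
    moreover have "6 * r\<^sup>2 \<le> A\<^sup>2 + B\<^sup>2" using rs by simp
    moreover have "A\<^sup>2 \<ge> 0" "B\<^sup>2 \<ge> 0" by simp_all
    ultimately show ?thesis by (smt (verit))
  qed
  have Phimono: "\<Phi> (k + j) \<le> \<Phi> k" if "k \<ge> 1" for k j
  proof (induction j)
    case 0 then show ?case by simp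
  next
    case (Suc j) then show ?case using dec[of "k + j"] that by simp
  qed
  have sumPhi: "real T * \<Phi> (T+1) \<le> 6 * S"
  proof -
    have "real T * \<Phi> (T+1) = (\<Sum>k\<in>{2..T+1}. \<Phi> (T+1))" by simp
    also have "\<dots> \<le> (\<Sum>k\<in>{2..T+1}. \<Phi> k)"
    proof (intro sum_mono)
      fix k assume "k \<in> {2..T+1}"
      then have "\<Phi> (k + (T+1-k)) \<le> \<Phi> k" by (intro Phimono) auto
      then show "\<Phi> (T+1) \<le> \<Phi> k" using \<open>k \<in> {2..T+1}\<close> by simp
    qed
    also have "\<dots> \<le> (\<Sum>k\<in>{2..T+1}. 3 * (a (k-1) + a (k-2)))" by (intro sum_mono Phib) auto
    also have "\<dots> = 3 * ((\<Sum>k\<in>{2..T+1}. a (k-1)) + (\<Sum>k\<in>{2..T+1}. a (k-2)))"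
      by (simp add: sum.distrib sum_distrib_left)
    also have "\<dots> \<le> 3 * (S + S)"
    proof -
      have "(\<Sum>k\<in>{2..T+1}. a (k-1)) \<le> S" unfolding S_def by (rule sum_shift1) (rule a_nn)
      moreover have "(\<Sum>k\<in>{2..T+1}. a (k-2)) \<le> S"
        using sum_shift2[of a T] a_nn[of T] by (simp add: S_def)
      ultimately show ?thesis by simp
    qed
    finally show ?thesis by simp
  qed
  define G where "G = norm (g (T+1))"
  define H where "H = norm (h (T+1))"
  define R where "R = norm (h (T+1) - g T)"
  have GPhi: "G\<^sup>2 \<le> 8 * \<Phi> (T+1)"
  proof -
    have "x (T+1) - w (T+1) = \<eta> *\<^sub>R (- g T)" by (simp add: w_def)
    then have d1: "norm (g (T+1) - h (T+1)) \<le> e * norm (- g T)" unfolding g_def h_def by (rule lipe)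
    have d2: "norm (g T) \<le> H + R" unfolding H_def R_def
      using norm_triangle_ineq4[of "h (T+1)" "h (T+1) - g T"] by simp
    have "G \<le> H + norm (g (T+1) - h (T+1))" unfolding G_def H_def
      using norm_triangle_ineq[of "h (T+1)" "g (T+1) - h (T+1)"] by simp
    also have "\<dots> \<le> H + e * (H + R)" using d1 d2 e0 by simp (smt (verit) mult_left_mono)
    also have "\<dots> \<le> 2 * (H + R)"
    proof -
      have "e * (H + R) \<le> 1 * (H + R)" using e1 by (intro mult_right_mono) (auto simp: H_def R_def)
      moreover have "R \<ge> 0" by (simp add: R_def)
      ultimately show ?thesis by (smt (verit))
    qed
    finally have "G\<^sup>2 \<le> (2 * (H + R))\<^sup>2" by (intro power_mono) (auto simp: G_def)
    also have "\<dots> = 4 * (H + R)\<^sup>2" by (simp only: power_mult_distrib) simp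
    also have "\<dots> \<le> 4 * (2 * (H\<^sup>2 + R\<^sup>2))" by (intro mult_left_mono sq2) auto
    finally show ?thesis by (simp add: \<Phi>_def H_def R_def)
  qed
  have Phi_nn: "\<Phi> (T+1) \<ge> 0" by (simp add: \<Phi>_def)
  have "(G * \<eta> * sqrt T)\<^sup>2 = G\<^sup>2 * (\<eta>\<^sup>2 * T)" by (simp add: power_mult_distrib)
  also have "\<dots> \<le> (8 * \<Phi> (T+1)) * (\<eta>\<^sup>2 * T)" using GPhi by (intro mult_right_mono) auto
  also have "\<dots> = 8 * \<eta>\<^sup>2 * (real T * \<Phi> (T+1))" by (simp add: algebra_simps)
  also have "\<dots> \<le> 8 * \<eta>\<^sup>2 * (6 * S)" using sumPhi by (intro mult_left_mono) auto
  also have "\<dots> = 48 * (\<eta>\<^sup>2 * S)" by simp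
  also have "\<dots> \<le> 48 * (6/5 * D\<^sup>2)" using etaS by linarith
  also have "\<dots> \<le> (60 * D)\<^sup>2" by (simp add: power_mult_distrib)
  finally have sq: "(G * \<eta> * sqrt T)\<^sup>2 \<le> (60 * D)\<^sup>2" .
  have "G * \<eta> * sqrt T \<le> 60 * D" using power2_le_imp_le[OF sq] D_nn by simp
  moreover have "\<eta> * sqrt T > 0" using eta_pos T by simp
  ultimately show ?thesis by (simp add: G_def g_def pos_le_divide_eq mult.assoc)
qed

theorem theorem5:
  fixes f :: "'k::finite \<Rightarrow> real^'n \<Rightarrow> real"
    and pl :: "'n \<Rightarrow> 'k"
    and l \<Lambda> D \<eta> :: real
    and z :: "int \<Rightarrow> real^'n"
    and zstar :: "real^'n"
  assumes players: "surj pl"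
    and C2: "\<And>k. C2_fun (f k)"
    and monotone: "\<And>x y. (game_op f pl y - game_op f pl x) \<bullet> (y - x) \<ge> 0"
    and l_pos: "l > 0" and \<Lambda>_pos: "\<Lambda> > 0"
    and F_lip: "\<And>x y. norm (game_op f pl x - game_op f pl y) \<le> l * norm (x - y)"
    and J_lip: "\<And>x y. jac_diff_norm (game_op f pl) x y \<le> \<Lambda> * norm (x - y)"
    and zero: "game_op f pl zstar = 0"
    and D1: "norm (zstar - z (-1)) \<le> D"
    and D0: "norm (zstar - z 0) \<le> D"
    and eta_pos: "\<eta> > 0"
    and eta1: "\<eta> \<le> 1 / (150 * l)"
    and eta2: "\<eta> * (1711 * D * \<Lambda>) \<le> 1"
    and OG: "\<And>t. t \<ge> 0 \<Longrightarrow>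
              z (t + 1) = z t - (2 * \<eta>) *\<^sub>R game_op f pl (z t) + \<eta> *\<^sub>R game_op f pl (z (t - 1))"
  shows "\<forall>T::nat. T \<ge> 1 \<longrightarrow>
           norm (game_op f pl (z (int T))) \<le> 60 * D / (\<eta> * sqrt (real T))"
proof (intro allI impI)
  fix T :: nat assume T: "T \<ge> 1"
  define x where "x k = z (int k - 1)" for k :: nat
  have eps: "l * \<eta> \<le> 1/150"
  proof -
    have "l * \<eta> \<le> l * (1 / (150 * l))" using eta1 l_pos by (intro mult_left_mono) auto
    also have "\<dots> = 1/150" using l_pos by simp
    finally show ?thesis .
  qed
  have rec: "x (Suc k) = x k - (2*\<eta>) *\<^sub>R game_op f pl (x k) + \<eta> *\<^sub>R game_op f pl (x (k-1))"
    if k1: "k \<ge> 1" for k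
  proof -
    have "int k - 1 \<ge> 0" using k1 by simp
    from OG[OF this] have "z (int k) = z (int k - 1) - (2*\<eta>) *\<^sub>R game_op f pl (z (int k - 1))
        + \<eta> *\<^sub>R game_op f pl (z (int k - 1 - 1))" by simp
    moreover have "int (k - 1) - 1 = int k - 1 - 1" using k1 by simp
    ultimately show ?thesis by (simp add: x_def)
  qed
  have mono: "\<And>u v. (game_op f pl u - game_op f pl v) \<bullet> (u - v) \<ge> 0" using monotone by blast
  have "norm (game_op f pl (x (Suc T))) \<le> 60 * D / (\<eta> * sqrt T)"
    by (rule og_core[where F = "game_op f pl" and x = x, OF mono F_lip zero _ _ eta_pos l_pos eps rec T])
       (use D1 D0 in \<open>simp_all add: x_def\<close>)
  then show "norm (game_op f pl (z (int T))) \<le> 60 * D / (\<eta> * sqrt (real T))" by (simp add: x_def)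
qed

end
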